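(* Let $\rho=\sum_j p_j|e_j\rangle\langle e_j|$ be a full-rank density matrix on $\mathbb{C}^D$ (all $p_j>0$, orthonormal eigenvectors $|e_j\rangle$) with Hermitian derivatives $\rho_1=\partial_1\rho$, $\rho_2=\partial_2\rho$. Let $u\in[0,1]$, $\mathbf z\in\mathbb R^6$, $\mathbf b=(0,1,0,0,0,1)^\top$, $A=\tfrac12(z_1\rho+z_2\rho_1+z_3\rho_2-iz_4\rho-iz_5\rho_1-iz_6\rho_2)$, and $$\mathsf L(Y,u,\mathbf z)=-\mathbf b^\top\mathbf z+u\,\mathrm{Tr}[Y\rho Y^\dagger]+(1-u)\,\mathrm{Tr}[Y^\dagger\rho Y]+\mathrm{Tr}[AY]+\mathrm{Tr}[A^\dagger Y^\dagger]$$ for complex $D\times D$ matrices $Y$. Then the $Y$ minimising $\mathsf L(\cdot,u,\mathbf z)$ is $$Y=-\sum_{j,k}(u\,p_k+(1-u)\,p_j)^{-1}\langle e_j|A^\dagger|e_k\rangle\,|e_j\rangle\langle e_k|.$$ *)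

theory Defs
  imports "HOL-Analysis.Analysis"
begin

text \<open>Complex D x D matrices are modelled as complex^'n^'n with D = CARD('n).\<close>

definition cadj :: "complex^'n^'m \<Rightarrow> complex^'m^'n" where
  "cadj M = (\<chi> i j. cnj (M $ j $ i))"

definition mscale :: "complex \<Rightarrow> complex^'n^'m \<Rightarrow> complex^'n^'m" where
  "mscale c M = (\<chi> i j. c * M $ i $ j)"

definition ket_bra :: "complex^'n \<Rightarrow> complex^'n \<Rightarrow> complex^'n^'n" where
  "ket_bra x y = (\<chi> a b. x $ a * cnj (y $ b))"

definition braket :: "complex^'n \<Rightarrow> complex^'n \<Rightarrow> complex" where
  "braket x y = (\<Sum>a\<in>UNIV. cnj (x $ a) * y $ a)"

definition mat_elem :: "complex^'n \<Rightarrow> complex^'n^'n \<Rightarrow> complex^'n \<Rightarrow> complex" where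
  "mat_elem x M y = braket x (M *v y)"

definition orthonormal_basis :: "('n::finite \<Rightarrow> complex^'n) \<Rightarrow> bool" where
  "orthonormal_basis e \<longleftrightarrow> (\<forall>j k. braket (e j) (e k) = (if j = k then 1 else 0))"

definition A_op :: "complex^'n^'n \<Rightarrow> complex^'n^'n \<Rightarrow> complex^'n^'n \<Rightarrow> real^6 \<Rightarrow> complex^'n^'n" where
  "A_op \<rho> \<rho>1 \<rho>2 z = mscale (1/2)
     (mscale (complex_of_real (z$1)) \<rho> + mscale (complex_of_real (z$2)) \<rho>1
      + mscale (complex_of_real (z$3)) \<rho>2
      - mscale (\<i> * complex_of_real (z$4)) \<rho> - mscale (\<i> * complex_of_real (z$5)) \<rho>1
      - mscale (\<i> * complex_of_real (z$6)) \<rho>2)"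

definition bvec :: "real^6" where
  "bvec = (\<chi> i. if i = 2 \<or> i = 6 then 1 else 0)"

text \<open>The Lagrangian L(Y,u,z) (complex-valued; it is real for all Y).\<close>
definition L_fun :: "complex^'n^'n \<Rightarrow> complex^'n^'n \<Rightarrow> complex^'n^'n \<Rightarrow> complex^'n^'n \<Rightarrow> real \<Rightarrow> real^6 \<Rightarrow> complex" where
  "L_fun \<rho> \<rho>1 \<rho>2 Y u z =
     (let A = A_op \<rho> \<rho>1 \<rho>2 z in
       - complex_of_real (bvec \<bullet> z)
       + complex_of_real u * trace (Y ** \<rho> ** cadj Y)
       + complex_of_real (1 - u) * trace (cadj Y ** \<rho> ** Y)
       + trace (A ** Y) + trace (cadj A ** cadj Y))"

end

theory Submission
  imports Defs
begin

lemma mm_entry: "((A::'a::semiring_1^'n^'m) ** B) $ i $ j = (\<Sum>k\<in>UNIV. A$i$k * B$k$j)"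
  by (simp add: matrix_matrix_mult_def)

lemma cadj_entry[simp]: "cadj M $ i $ j = cnj (M $ j $ i)"
  by (simp add: cadj_def)

lemma mscale_entry[simp]: "mscale c M $ i $ j = c * M $ i $ j"
  by (simp add: mscale_def)

lemma cadj_cadj[simp]: "cadj (cadj M) = M"
  by (simp add: vec_eq_iff)

lemma cadj_mult: "cadj ((M::complex^'n^'m) ** N) = cadj N ** cadj M"
  by (simp add: vec_eq_iff mm_entry mult.commute)

lemma mult_mscale_right: "(A::complex^'n^'m) ** mscale c M = mscale c (A ** M)"
  by (simp add: vec_eq_iff mm_entry sum_distrib_left mult_ac)

lemma mult_mscale_left: "mscale c (M::complex^'n^'m) ** A = mscale c (M ** A)"
  by (simp add: vec_eq_iff mm_entry sum_distrib_left mult_ac)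

lemma mult_sum_right: "(A::complex^'n^'m) ** (\<Sum>x\<in>S. f x) = (\<Sum>x\<in>S. A ** f x)"
  by (induction S rule: infinite_finite_induct) (auto simp: matrix_add_ldistrib)

lemma mult_add_left: "(B + C) ** (A::complex^'n^'m) = B ** A + C ** A"
  by (simp add: vec_eq_iff mm_entry sum.distrib distrib_right)

lemma mult_sum_left: "(\<Sum>x\<in>S. f x) ** (A::complex^'n^'m) = (\<Sum>x\<in>S. f x ** A)"
  by (induction S rule: infinite_finite_induct) (auto simp: mult_add_left)

lemma mult_uminus_right: "(A::complex^'n^'m) ** (- M) = - (A ** M)"
  by (simp add: vec_eq_iff mm_entry sum_negf)

lemma mult_uminus_left: "(- M) ** (A::complex^'n^'m) = - (M ** A)"
  by (simp add: vec_eq_iff mm_entry sum_negf)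

lemma trace_cadj: "trace (cadj (M::complex^'n^'n)) = cnj (trace M)"
  by (simp add: trace_def)

lemma scalar_ineq:
  fixes w :: real and a v :: complex
  assumes "w > 0"
  shows "w * (cmod v)^2 + 2 * Re (a * v) - (w * (cmod (- (cnj a / w)))^2 + 2 * Re (a * (- (cnj a / w))))
       = w * (cmod (v - (- (cnj a / w))))^2"
  using assms
  apply (simp only: cmod_power2)
  apply (simp add: field_simps power2_eq_square)
  done



lemma Re_sq: "Re (v * complex_of_real r * cnj v) = r * (cmod v)^2"
  unfolding cmod_power2 by (simp add: algebra_simps power2_eq_square)

lemma Re_sq2: "Re (cnj v * complex_of_real r * v) = r * (cmod v)^2"
  unfolding cmod_power2 by (simp add: algebra_simps power2_eq_square)

lemma if_conj_split: "(if P \<and> Q then t else 0) = (if P then (if Q then t else 0) else 0)"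
  by simp

lemma double_delta:
  fixes f :: "'a::finite \<Rightarrow> 'b::finite \<Rightarrow> 'c::comm_monoid_add"
  shows "(\<Sum>x\<in>UNIV. \<Sum>y\<in>UNIV. if i = x \<and> k = y then f x y else 0) = f i k"
proof -
  have "(\<Sum>y\<in>UNIV. if i = x \<and> k = y then f x y else 0) = (if i = x then f x k else 0)" for x
    by (cases "i = x") simp_all
  then show ?thesis by simp
qed

theorem lemma5:
  fixes \<rho> \<rho>1 \<rho>2 :: "complex^'n^'n"
    and e :: "'n \<Rightarrow> complex^'n" and p :: "'n \<Rightarrow> real"
    and u :: real and z :: "real^6"
  assumes onb: "orthonormal_basis e"
    and pos: "\<And>j. p j > 0"
    and tr1: "(\<Sum>j\<in>UNIV. p j) = 1"
    and rho: "\<rho> = (\<Sum>j\<in>UNIV. mscale (complex_of_real (p j)) (ket_bra (e j) (e j)))"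
    and herm1: "cadj \<rho>1 = \<rho>1"
    and herm2: "cadj \<rho>2 = \<rho>2"
    and u: "0 \<le> u" "u \<le> 1"
  defines "Ystar \<equiv> - (\<Sum>j\<in>UNIV. \<Sum>k\<in>UNIV.
              mscale (complex_of_real (inverse (u * p k + (1 - u) * p j))
                        * mat_elem (e j) (cadj (A_op \<rho> \<rho>1 \<rho>2 z)) (e k))
                     (ket_bra (e j) (e k)))"
  shows "(\<forall>Y. Re (L_fun \<rho> \<rho>1 \<rho>2 Ystar u z) \<le> Re (L_fun \<rho> \<rho>1 \<rho>2 Y u z))
       \<and> (\<forall>Y. (\<forall>Y'. Re (L_fun \<rho> \<rho>1 \<rho>2 Y u z) \<le> Re (L_fun \<rho> \<rho>1 \<rho>2 Y' u z)) \<longrightarrow> Y = Ystar)"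
proof -
  define E :: "complex^'n^'n" where "E = (\<chi> a j. e j $ a)"
  have EE1: "cadj E ** E = mat 1"
    using onb by (simp add: vec_eq_iff mm_entry E_def mat_def orthonormal_basis_def braket_def)
  have EE2: "E ** cadj E = mat 1" using EE1 matrix_left_right_inverse by blast
  define T where "T M = cadj E ** M ** E" for M :: "complex^'n^'n"
  have T_mult: "T (M ** N) = T M ** T N" for M N
  proof -
    have "T M ** T N = cadj E ** M ** (E ** cadj E) ** N ** E"
      by (simp add: T_def matrix_mul_assoc)
    then show ?thesis by (simp add: EE2 T_def matrix_mul_assoc)
  qed
  have T_cadj: "T (cadj M) = cadj (T M)" for M
    by (simp add: T_def cadj_mult matrix_mul_assoc)
  have T_trace: "trace (T M) = trace M" for M
  proof -
    have "trace (T M) = trace (cadj E ** (M ** E))" by (simp add: T_def matrix_mul_assoc)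
    also have "\<dots> = trace ((M ** E) ** cadj E)" by (rule trace_mul_sym)
    also have "\<dots> = trace M" by (simp add: matrix_mul_assoc[symmetric] EE2)
    finally show ?thesis .
  qed
  have T_inj: "M = N" if "T M = T N" for M N
  proof -
    have "E ** T M ** cadj E = M" for M
      by (simp add: T_def matrix_mul_assoc EE2) (simp add: matrix_mul_assoc[symmetric] EE2)
    then show ?thesis using that by metis
  qed
  have T_entry: "T M $ j $ k = (\<Sum>a\<in>UNIV. cnj (e j $ a) * (\<Sum>b\<in>UNIV. M$a$b * e k $ b))" for M j k
    unfolding T_def mm_entry E_def
    by (simp add: sum_distrib_left sum_distrib_right mult_ac) (rule sum.swap)
  have T_mscale: "T (mscale c M) = mscale c (T M)" for c M
    by (simp add: T_def mult_mscale_left mult_mscale_right)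
  have T_sum: "T (\<Sum>x\<in>S. f x) = (\<Sum>x\<in>S. T (f x))" for S and f :: "'b \<Rightarrow> complex^'n^'n"
    by (simp add: T_def mult_sum_left mult_sum_right)
  have T_uminus: "T (- M) = - T M" for M
    by (simp add: T_def mult_uminus_left mult_uminus_right)
  have T_kb: "T (ket_bra (e l) (e m)) = (\<chi> j k. if j = l \<and> k = m then 1 else 0)" for l m
  proof -
    have "T (ket_bra (e l) (e m)) $ j $ k = braket (e j) (e l) * braket (e m) (e k)" for j k
      unfolding T_entry ket_bra_def braket_def
      by (simp add: sum_product sum_distrib_left mult_ac)
    then show ?thesis using onb by (simp add: vec_eq_iff orthonormal_basis_def)
  qed
  define P :: "complex^'n^'n" where "P = (\<chi> j k. if j = k then complex_of_real (p j) else 0)"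
  have T_rho: "T \<rho> = P"
    unfolding rho T_sum T_mscale T_kb P_def
    by (simp add: vec_eq_iff sum_component if_distrib cong: if_cong) (auto intro!: sum.neutral)
  define a where "a = T (A_op \<rho> \<rho>1 \<rho>2 z)"
  define w where "w j k = u * p k + (1 - u) * p j" for j k
  have wpos: "w j k > 0" for j k
  proof (cases "u = 0")
    case True then show ?thesis using pos by (simp add: w_def)
  next
    case False
    then have "u * p k > 0" using u pos by simp
    moreover have "(1 - u) * p j \<ge> 0" using u pos by (simp add: less_imp_le)
    ultimately show ?thesis by (simp add: w_def)
  qed
  define ys :: "complex^'n^'n" where "ys = (\<chi> j k. - (cnj (a $ k $ j) / complex_of_real (w j k)))"
  have me: "mat_elem (e j) (cadj (A_op \<rho> \<rho>1 \<rho>2 z)) (e k) = cnj (a $ k $ j)" for j k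
  proof -
    have "mat_elem (e j) (cadj (A_op \<rho> \<rho>1 \<rho>2 z)) (e k) = T (cadj (A_op \<rho> \<rho>1 \<rho>2 z)) $ j $ k"
      unfolding T_entry mat_elem_def braket_def by (simp add: matrix_vector_mult_def)
    then show ?thesis by (simp add: T_cadj a_def)
  qed
  have T_ys: "T Ystar = ys"
    unfolding Ystar_def T_uminus T_sum T_mscale T_kb ys_def me
    apply (simp add: vec_eq_iff sum_component if_distrib w_def[symmetric] cong: if_cong)
    by (simp add: double_delta divide_inverse mult.commute)
  define Lc where "Lc y = - complex_of_real (bvec \<bullet> z)
       + complex_of_real u * trace (y ** P ** cadj y)
       + complex_of_real (1 - u) * trace (cadj y ** P ** y)
       + trace (a ** y) + trace (cadj a ** cadj y)" for y
  have L_T: "L_fun \<rho> \<rho>1 \<rho>2 Y u z = Lc (T Y)" for Y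
  proof -
    have 1: "trace (Y ** \<rho> ** cadj Y) = trace (T Y ** P ** cadj (T Y))"
      by (metis T_trace T_mult T_cadj T_rho)
    have 2: "trace (cadj Y ** \<rho> ** Y) = trace (cadj (T Y) ** P ** T Y)"
      by (metis T_trace T_mult T_cadj T_rho)
    have 3: "trace (A_op \<rho> \<rho>1 \<rho>2 z ** Y) = trace (a ** T Y)"
      by (metis T_trace T_mult a_def)
    have 4: "trace (cadj (A_op \<rho> \<rho>1 \<rho>2 z) ** cadj Y) = trace (cadj a ** cadj (T Y))"
      by (metis T_trace T_mult T_cadj a_def)
    show ?thesis unfolding L_fun_def Let_def Lc_def 1 2 3 4 by simp
  qed
  have yP: "(y ** P) $ j $ l = y $ j $ l * complex_of_real (p l)" for y j l
    by (simp add: mm_entry P_def if_distrib cong: if_cong)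
  have Py: "(P ** y) $ j $ l = complex_of_real (p j) * y $ j $ l" for y j l
  proof -
    have "(P ** y) $ j $ l = (\<Sum>k\<in>UNIV. if j = k then complex_of_real (p k) * y $ k $ l else 0)"
      unfolding mm_entry P_def by (intro sum.cong) auto
    then show ?thesis by simp
  qed
  have R1: "trace (y ** P ** cadj y) = (\<Sum>j\<in>UNIV. \<Sum>k\<in>UNIV. y$j$k * complex_of_real (p k) * cnj (y$j$k))" for y
    by (simp add: trace_def mm_entry[of "y ** P"] yP)
  have R2: "trace (cadj y ** P ** y) = (\<Sum>j\<in>UNIV. \<Sum>k\<in>UNIV. cnj (y$j$k) * complex_of_real (p j) * y$j$k)" for y
    by (simp add: trace_def mm_entry[of "cadj y"] Py mult.assoc matrix_mul_assoc[symmetric]) (rule sum.swap)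
  have R3: "trace (a ** y) = (\<Sum>j\<in>UNIV. \<Sum>k\<in>UNIV. a$k$j * y$j$k)" for y
    by (simp add: trace_def mm_entry) (rule sum.swap)
  have R4: "trace (cadj a ** cadj y) = cnj (trace (a ** y))" for y
    by (metis cadj_mult trace_cadj trace_mul_sym)
  have ReLc: "Re (Lc y) = - (bvec \<bullet> z) + (\<Sum>j\<in>UNIV. \<Sum>k\<in>UNIV. w j k * (cmod (y$j$k))^2 + 2 * Re (a$k$j * y$j$k))" for y
  proof -
    have "Re (Lc y) = - (bvec \<bullet> z) + u * Re (trace (y ** P ** cadj y)) + (1 - u) * Re (trace (cadj y ** P ** y))
        + 2 * Re (trace (a ** y))"
      by (simp add: Lc_def R4)
    also have "\<dots> = - (bvec \<bullet> z) + (\<Sum>j\<in>UNIV. \<Sum>k\<in>UNIV. u * (p k * (cmod (y$j$k))^2) + (1 - u) * (p j * (cmod (y$j$k))^2)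
        + 2 * Re (a$k$j * y$j$k))"
      unfolding R1 R2 R3 Re_sum Re_sq Re_sq2 by (simp add: sum_distrib_left sum.distrib)
    also have "\<dots> = - (bvec \<bullet> z) + (\<Sum>j\<in>UNIV. \<Sum>k\<in>UNIV. w j k * (cmod (y$j$k))^2 + 2 * Re (a$k$j * y$j$k))"
      by (simp add: w_def algebra_simps)
    finally show ?thesis .
  qed
  have key: "Re (L_fun \<rho> \<rho>1 \<rho>2 Y u z) - Re (L_fun \<rho> \<rho>1 \<rho>2 Ystar u z)
      = (\<Sum>j\<in>UNIV. \<Sum>k\<in>UNIV. w j k * (cmod (T Y $ j $ k - ys $ j $ k))^2)" for Y
  proof -
    have "Re (L_fun \<rho> \<rho>1 \<rho>2 Y u z) - Re (L_fun \<rho> \<rho>1 \<rho>2 Ystar u z)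
      = (\<Sum>j\<in>UNIV. \<Sum>k\<in>UNIV. (w j k * (cmod (T Y$j$k))^2 + 2 * Re (a$k$j * T Y$j$k))
          - (w j k * (cmod (ys$j$k))^2 + 2 * Re (a$k$j * ys$j$k)))"
      unfolding L_T T_ys ReLc by (simp add: sum_subtractf)
    also have "\<dots> = (\<Sum>j\<in>UNIV. \<Sum>k\<in>UNIV. w j k * (cmod (T Y $ j $ k - ys $ j $ k))^2)"
      unfolding ys_def using scalar_ineq[OF wpos] by simp
    finally show ?thesis .
  qed
  have nonneg: "0 \<le> w j k * (cmod (T Y $ j $ k - ys $ j $ k))^2" for Y j k
    using wpos[of j k] by simp
  show ?thesis
  proof (intro conjI allI impI)
    fix Y
    show "Re (L_fun \<rho> \<rho>1 \<rho>2 Ystar u z) \<le> Re (L_fun \<rho> \<rho>1 \<rho>2 Y u z)"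
    proof -
      have "0 \<le> (\<Sum>j\<in>UNIV. \<Sum>k\<in>UNIV. w j k * (cmod (T Y $ j $ k - ys $ j $ k))^2)"
        by (intro sum_nonneg) (rule nonneg)
      then show ?thesis using key[of Y] by linarith
    qed
  next
    fix Y
    assume "\<forall>Y'. Re (L_fun \<rho> \<rho>1 \<rho>2 Y u z) \<le> Re (L_fun \<rho> \<rho>1 \<rho>2 Y' u z)"
    then have le: "Re (L_fun \<rho> \<rho>1 \<rho>2 Y u z) \<le> Re (L_fun \<rho> \<rho>1 \<rho>2 Ystar u z)" by blast
    have inner_nn: "0 \<le> (\<Sum>k\<in>UNIV. w j k * (cmod (T Y $ j $ k - ys $ j $ k))^2)" for j
      by (intro sum_nonneg) (rule nonneg)
    have "(\<Sum>j\<in>UNIV. \<Sum>k\<in>UNIV. w j k * (cmod (T Y $ j $ k - ys $ j $ k))^2) = 0"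
      using key[of Y] le sum_nonneg[of UNIV "\<lambda>j. \<Sum>k\<in>UNIV. w j k * (cmod (T Y $ j $ k - ys $ j $ k))^2", OF inner_nn]
      by linarith
    then have "\<forall>j. (\<Sum>k\<in>UNIV. w j k * (cmod (T Y $ j $ k - ys $ j $ k))^2) = 0"
      using inner_nn by (simp add: sum_nonneg_eq_0_iff)
    then have "\<forall>j k. w j k * (cmod (T Y $ j $ k - ys $ j $ k))^2 = 0"
      using nonneg by (simp add: sum_nonneg_eq_0_iff)
    then have "\<forall>j k. T Y $ j $ k = ys $ j $ k"
      using wpos by (metis less_numeral_extra(3) mult_eq_0_iff power_eq_0_iff right_minus_eq norm_eq_zero)
    then have "T Y = T Ystar" by (simp add: T_ys vec_eq_iff)
    then show "Y = Ystar" by (rule T_inj)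
  qed
qed

end
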